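(* Let $\mathcal H,\mathcal L$ be Hilbert spaces, $\mathcal A=\bigcup_i\mathcal A_i\subset\mathcal H$ a closed proximal union of linear subspaces, and $\Phi:\mathcal H\to\mathcal L$ a bounded linear operator that is bi-Lipschitz on $\mathcal A$ with constants $0<\alpha\le\beta$. Let $\mu>0$ satisfy $\beta\le 1/\mu<1.5\,\alpha$ and $\mu\alpha<1$. Let $x\in\mathcal H$ be arbitrary, $e\in\mathcal L$, $y=\Phi x+e$, $x_{\mathcal A}\in p_{\mathcal A}(x)$, and $e_{\mathcal A}=y-\Phi x_{\mathcal A}=\Phi(x-x_{\mathcal A})+e$. Consider the Iterative Projection Algorithm: $x^0=0$ and $x^{n+1}\in p_{\mathcal A}\big(x^n+\mu\Phi^*(y-\Phi x^n)\big)$ (any choice of element). Assume $x_{\mathcal A}\neq0$, $e_{\mathcal A}\ne0$, and let $\delta>0$ with $\delta\|e_{\mathcal A}\|<\|x_{\mathcal A}\|$. Then after $$n^\star=\left\lceil 2\,\frac{\ln\!\big(\delta\|e_{\mathcal A}\|/\|x_{\mathcal A}\|\big)}{\ln\!\big(2/(\mu\alpha)-2\big)}\right\rceil$$ iterations, $$\|x-x^{n^\star}\|\le\big(c^{1/2}+\delta\big)\|e_{\mathcal A}\|+\|x_{\mathcal A}-x\|,\qquad c=\frac{4}{3\alpha-2/\mu}.$$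
   Context: $\Phi^*$ is the adjoint of $\Phi$. A set $\mathcal B$ is proximal if for every $w$ the set $p_{\mathcal B}(w)=\{\tilde w\in\mathcal B:\|\tilde w-w\|=\inf_{\hat w\in\mathcal B}\|\hat w-w\|\}$ is nonempty. $\Phi$ is bi-Lipschitz on $\mathcal A$ with constants $0<\alpha\le\beta$ if for all $x_1,x_2\in\mathcal A$: $\alpha\|x_1-x_2\|^2\le\|\Phi(x_1-x_2)\|^2\le\beta\|x_1-x_2\|^2$. *)

theory Defs
  imports "HOL-Analysis.Analysis"
begin

definition proj_set :: "'a::real_normed_vector set \<Rightarrow> 'a \<Rightarrow> 'a set" where
  "proj_set B w = {w' \<in> B. norm (w' - w) = (INF b\<in>B. norm (b - w))}"

definition proximal :: "'a::real_normed_vector set \<Rightarrow> bool" where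
  "proximal B \<longleftrightarrow> (\<forall>w. proj_set B w \<noteq> {})"

definition bi_lipschitz_on ::
  "('a::real_normed_vector \<Rightarrow> 'b::real_normed_vector) \<Rightarrow> 'a set \<Rightarrow> real \<Rightarrow> real \<Rightarrow> bool" where
  "bi_lipschitz_on \<Phi> A \<alpha> \<beta> \<longleftrightarrow>
     (\<forall>x1\<in>A. \<forall>x2\<in>A. \<alpha> * (norm (x1 - x2))^2 \<le> (norm (\<Phi> (x1 - x2)))^2
                    \<and> (norm (\<Phi> (x1 - x2)))^2 \<le> \<beta> * (norm (x1 - x2))^2)"

end

theory Submission
  imports Defs
begin

lemma proj_le:
  fixes B :: "'a::real_normed_vector set"
  assumes "v \<in> proj_set B a" "b \<in> B"
  shows "norm (v - a) \<le> norm (b - a)"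
proof -
  have "norm (v - a) = (INF b\<in>B. norm (b - a))" using assms(1) by (simp add: proj_set_def)
  also have "\<dots> \<le> norm (b - a)"
    by (rule cINF_lower) (auto intro: bdd_belowI[where m=0] simp: assms(2))
  finally show ?thesis .
qed

lemma nds:
  fixes p q :: "'a::real_inner"
  shows "(norm (p - q))^2 = (norm p)^2 - 2 * inner p q + (norm q)^2"
  by (simp add: power2_norm_eq_inner inner_diff inner_commute)

theorem theorem2:
  fixes \<Phi> :: "'a::{real_inner,complete_space} \<Rightarrow> 'b::{real_inner,complete_space}"
    and \<Phi>adj :: "'b \<Rightarrow> 'a"
    and Ai :: "'i \<Rightarrow> 'a set" and A :: "'a set"
    and \<alpha> \<beta> \<mu> \<delta> :: real
    and x xA :: 'a and e y eA :: 'b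
    and xs :: "nat \<Rightarrow> 'a"
  assumes subsp: "\<And>i. subspace (Ai i)"
    and A_def: "A = (\<Union>i. Ai i)"
    and A_closed: "closed A"
    and A_prox: "proximal A"
    and lin: "bounded_linear \<Phi>"
    and adj: "\<And>u v. inner (\<Phi> u) v = inner u (\<Phi>adj v)"
    and \<alpha>_pos: "0 < \<alpha>" and \<alpha>\<beta>: "\<alpha> \<le> \<beta>"
    and bilip: "bi_lipschitz_on \<Phi> A \<alpha> \<beta>"
    and \<mu>_pos: "0 < \<mu>" and \<mu>1: "\<beta> \<le> 1 / \<mu>" and \<mu>2: "1 / \<mu> < 1.5 * \<alpha>" and \<mu>3: "\<mu> * \<alpha> < 1"
    and y_def: "y = \<Phi> x + e"
    and xA: "xA \<in> proj_set A x"
    and eA_def: "eA = y - \<Phi> xA"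
    and xs0: "xs 0 = 0"
    and xsSuc: "\<And>n. xs (Suc n) \<in> proj_set A (xs n + \<mu> *\<^sub>R \<Phi>adj (y - \<Phi> (xs n)))"
    and xA_nz: "xA \<noteq> 0" and eA_nz: "eA \<noteq> 0"
    and \<delta>_pos: "0 < \<delta>" and \<delta>_small: "\<delta> * norm eA < norm xA"
  shows "norm (x - xs (nat \<lceil>2 * ln (\<delta> * norm eA / norm xA) / ln (2 / (\<mu> * \<alpha>) - 2)\<rceil>))
           \<le> (sqrt (4 / (3 * \<alpha> - 2 / \<mu>)) + \<delta>) * norm eA + norm (xA - x)"
proof -
  have Pd: "\<Phi> (a - b) = \<Phi> a - \<Phi> b" for a b using lin by (simp add: linear_diff bounded_linear.linear)
  have Pa: "\<Phi> (a + b) = \<Phi> a + \<Phi> b" for a b using lin by (simp add: linear_add bounded_linear.linear)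
  have zA: "0 \<in> A" using subspace_0[OF subsp[of undefined]] A_def by blast
  have xsA: "xs n \<in> A" for n
    by (cases n) (use zA xs0 xsSuc in \<open>auto simp: proj_set_def\<close>)
  have xAA: "xA \<in> A" using xA by (simp add: proj_set_def)
  have BL: "\<alpha> * (norm (x1 - x2))^2 \<le> (norm (\<Phi> (x1 - x2)))^2"
     "(norm (\<Phi> (x1 - x2)))^2 \<le> \<beta> * (norm (x1 - x2))^2" if "x1 \<in> A" "x2 \<in> A" for x1 x2
    using bilip that unfolding bi_lipschitz_on_def by auto
  define E where "E = (norm eA)^2"
  define d where "d n = (norm (xA - xs n))^2" for n
  define r where "r = 2 / (\<mu> * \<alpha>) - 2"
  have ma: "\<mu> * \<alpha> > 0" using \<mu>_pos \<alpha>_pos by simp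
  have r_pos: "r > 0" unfolding r_def using \<mu>3 ma by (simp add: field_simps)
  have r_lt1: "r < 1"
  proof -
    have "1 < 1.5 * \<alpha> * \<mu>" using \<mu>2 \<mu>_pos by (simp add: field_simps)
    thus ?thesis unfolding r_def using ma by (simp add: field_simps)
  qed
  have step: "d (Suc n) \<le> r * d n + 4 / \<alpha> * E" for n
  proof -
    define u where "u = xs n"
    define v where "v = xs (Suc n)"
    define g where "g = \<Phi>adj (y - \<Phi> u)"
    define a where "a = u + \<mu> *\<^sub>R g"
    define w where "w = \<Phi> (xA - u)"
    have uA: "u \<in> A" and vA: "v \<in> A" using xsA u_def v_def by auto
    have 1: "norm (v - a) \<le> norm (xA - a)"
      using proj_le[OF xsSuc[of n] xAA] unfolding v_def a_def g_def u_def by simp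
    have h1b: "(norm (v - a))^2 \<le> (norm (xA - a))^2"
      using 1 by (simp add: power_mono)
    have 2: "(norm (\<Phi> (v - u)))^2 \<le> (1/\<mu>) * (norm (v - u))^2"
    proof -
      have "\<beta> * (norm (v - u))^2 \<le> (1/\<mu>) * (norm (v - u))^2"
        using \<mu>1 by (rule mult_right_mono) simp
      thus ?thesis using BL(2)[OF vA uA] by linarith
    qed
    have 3: "(norm (y - \<Phi> v))^2 = (norm (y - \<Phi> u))^2 - 2 * inner (\<Phi> (v - u)) (y - \<Phi> u) + (norm (\<Phi> (v - u)))^2"
    proof -
      have e: "y - \<Phi> v = (y - \<Phi> u) - \<Phi> (v - u)" by (simp add: Pd)
      have "(norm (y - \<Phi> v))^2 = (norm (y - \<Phi> u))^2 - 2 * inner (y - \<Phi> u) (\<Phi> (v - u)) + (norm (\<Phi> (v - u)))^2"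
        unfolding e by (rule nds)
      thus ?thesis by (simp add: inner_commute)
    qed
    have 4: "inner (\<Phi> (v - u)) (y - \<Phi> u) = inner (v - u) g" unfolding g_def by (rule adj)
    have 5: "(norm (v - a))^2 = (norm (v - u))^2 - 2 * \<mu> * inner (v - u) g + \<mu>^2 * (norm g)^2"
    proof -
      have e: "v - a = (v - u) - \<mu> *\<^sub>R g" by (simp add: a_def)
      have "(norm (v - a))^2 = (norm (v - u))^2 - 2 * inner (v - u) (\<mu> *\<^sub>R g) + (norm (\<mu> *\<^sub>R g))^2"
        unfolding e by (rule nds)
      thus ?thesis using \<mu>_pos by (simp add: power_mult_distrib)
    qed
    have 6: "(norm (xA - a))^2 = (norm (xA - u))^2 - 2 * \<mu> * inner (xA - u) g + \<mu>^2 * (norm g)^2"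
    proof -
      have e: "xA - a = (xA - u) - \<mu> *\<^sub>R g" by (simp add: a_def)
      have "(norm (xA - a))^2 = (norm (xA - u))^2 - 2 * inner (xA - u) (\<mu> *\<^sub>R g) + (norm (\<mu> *\<^sub>R g))^2"
        unfolding e by (rule nds)
      thus ?thesis using \<mu>_pos by (simp add: power_mult_distrib)
    qed
    have 7: "inner (xA - u) g = inner w (y - \<Phi> u)" unfolding g_def w_def by (simp add: adj)
    have yu: "y - \<Phi> u = eA + w" unfolding w_def eA_def by (simp add: Pd)
    have 8: "(norm (y - \<Phi> u))^2 = E + 2 * inner eA w + (norm w)^2"
      unfolding yu E_def by (simp add: power2_norm_eq_inner inner_add algebra_simps inner_commute)
    have 9: "inner w (y - \<Phi> u) = inner eA w + (norm w)^2"
      unfolding yu by (simp add: power2_norm_eq_inner inner_add algebra_simps inner_commute)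
    have 10: "\<alpha> * d n \<le> (norm w)^2" unfolding d_def w_def u_def using BL(1)[OF xAA xsA] by simp
    have key: "(norm (y - \<Phi> v))^2 \<le> E + (1/\<mu> - \<alpha>) * d n"
    proof -
      have A1: "(norm (y - \<Phi> v))^2 \<le> (norm (y - \<Phi> u))^2 - 2 * inner (v - u) g + (1/\<mu>) * (norm (v - u))^2"
        using 3 4 2 by linarith
      have "(1/\<mu>) * (norm (v - u))^2 - 2 * inner (v - u) g = (1/\<mu>) * ((norm (v - a))^2 - \<mu>^2 * (norm g)^2)"
        using 5 \<mu>_pos by (simp add: field_simps power2_eq_square)
      also have "\<dots> \<le> (1/\<mu>) * ((norm (xA - a))^2 - \<mu>^2 * (norm g)^2)"
        using \<mu>_pos by (intro mult_left_mono diff_right_mono h1b) simp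
      also have "\<dots> = (1/\<mu>) * (norm (xA - u))^2 - 2 * inner (xA - u) g"
        using 6 \<mu>_pos by (simp add: field_simps power2_eq_square)
      finally have A2': "(1/\<mu>) * (norm (v - u))^2 - 2 * inner (v - u) g \<le> (1/\<mu>) * (norm (xA - u))^2 - 2 * inner (xA - u) g" .
      have dn: "d n = (norm (xA - u))^2" unfolding d_def u_def by simp
      have A2: "(1/\<mu>) * (norm (v - u))^2 - 2 * inner (v - u) g \<le> (1/\<mu>) * d n - 2 * inner (xA - u) g"
        using A2' dn by simp
      have "(norm (y - \<Phi> v))^2 \<le> E - (norm w)^2 + (1/\<mu>) * d n"
        using A1 A2 7 8 9 by linarith
      thus ?thesis using 10 by (simp add: algebra_simps)
    qed
    have yv: "\<Phi> (xA - v) = (y - \<Phi> v) - eA" unfolding eA_def by (simp add: Pd)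
    have 11: "(norm (\<Phi> (xA - v)))^2 \<le> 2 * (norm (y - \<Phi> v))^2 + 2 * E"
    proof -
      have "norm (\<Phi> (xA - v)) \<le> norm (y - \<Phi> v) + norm eA" unfolding yv by (rule norm_triangle_ineq4)
      hence "(norm (\<Phi> (xA - v)))^2 \<le> (norm (y - \<Phi> v) + norm eA)^2" by (simp add: power_mono)
      also have "\<dots> \<le> 2 * (norm (y - \<Phi> v))^2 + 2 * E" unfolding E_def
        by (smt (verit) power2_sum sum_squares_bound)
      finally show ?thesis .
    qed
    have 12: "\<alpha> * d (Suc n) \<le> (norm (\<Phi> (xA - v)))^2" unfolding d_def v_def using BL(1)[OF xAA xsA] by simp
    have "\<alpha> * d (Suc n) \<le> 4 * E + 2 * (1/\<mu> - \<alpha>) * d n" using 11 12 key by linarith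
    hence "d (Suc n) \<le> (4 * E + 2 * (1/\<mu> - \<alpha>) * d n) / \<alpha>" using \<alpha>_pos by (simp add: field_simps)
    also have "\<dots> = r * d n + 4 / \<alpha> * E" unfolding r_def using \<alpha>_pos \<mu>_pos by (simp add: field_simps)
    finally show ?thesis .
  qed
  define c where "c = 4 / (3 * \<alpha> - 2 / \<mu>)"
  have den: "3 * \<alpha> - 2 / \<mu> > 0" using \<mu>2 by simp
  have c_pos: "c > 0" unfolding c_def using den by simp
  have crel: "r * c + 4 / \<alpha> = c"
    unfolding c_def r_def using den \<alpha>_pos \<mu>_pos by (simp add: field_simps)
  have E0: "E \<ge> 0" unfolding E_def by simp
  have bound: "d n \<le> r ^ n * d 0 + c * E" for n
  proof (induction n)
    case 0 thus ?case using c_pos E0 by simp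
  next
    case (Suc n)
    have "d (Suc n) \<le> r * d n + 4 / \<alpha> * E" by (rule step)
    also have "\<dots> \<le> r * (r ^ n * d 0 + c * E) + 4 / \<alpha> * E"
      using Suc r_pos by (simp add: mult_left_mono)
    also have "\<dots> = r ^ Suc n * d 0 + (r * c + 4 / \<alpha>) * E" by (simp add: algebra_simps)
    finally show ?case using crel by simp
  qed
  define q where "q = \<delta> * norm eA / norm xA"
  have nxA: "norm xA > 0" using xA_nz by simp
  have q_pos: "q > 0" unfolding q_def using \<delta>_pos eA_nz nxA by simp
  have q_lt1: "q < 1" unfolding q_def using \<delta>_small nxA by simp
  define t where "t = 2 * ln q / ln r"
  define N where "N = nat \<lceil>t\<rceil>"
  have lnq: "ln q < 0" using q_pos q_lt1 by simp
  have lnr: "ln r < 0" using r_pos r_lt1 by simp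
  have t0: "t \<ge> 0" unfolding t_def using lnq lnr by (simp add: divide_nonpos_neg)
  have Nt: "real N \<ge> t" unfolding N_def by linarith
  have "r ^ N = r powr real N" using r_pos by (simp add: powr_realpow)
  also have "\<dots> \<le> r powr t" using Nt r_pos r_lt1 by (simp add: powr_mono')
  also have "\<dots> = exp (t * ln r)" using r_pos by (simp add: powr_def)
  also have "t * ln r = 2 * ln q" unfolding t_def using lnr by simp
  also have "2 * ln q = ln (q^2)" using q_pos by (simp add: ln_realpow)
  also have "exp (ln (q^2)) = q^2" using q_pos by simp
  finally have rN: "r ^ N \<le> q^2" .
  have d0: "d 0 = (norm xA)^2" unfolding d_def using xs0 by simp
  have "r ^ N * d 0 \<le> q^2 * (norm xA)^2" using rN d0 by (simp add: mult_right_mono)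
  also have "\<dots> = \<delta>^2 * E" unfolding q_def E_def using nxA by (simp add: field_simps power2_eq_square)
  finally have "d N \<le> \<delta>^2 * E + c * E" using bound[of N] by linarith
  hence "norm (xA - xs N) \<le> sqrt (\<delta>^2 * E + c * E)"
    unfolding d_def by (simp add: real_le_rsqrt)
  also have "\<dots> \<le> sqrt (\<delta>^2 * E) + sqrt (c * E)"
    using E0 c_pos by (simp add: sqrt_add_le_add_sqrt)
  also have "\<dots> = (sqrt c + \<delta>) * norm eA"
    unfolding E_def using \<delta>_pos c_pos by (simp add: real_sqrt_mult algebra_simps)
  finally have fin: "norm (xA - xs N) \<le> (sqrt c + \<delta>) * norm eA" .
  have "norm (x - xs N) \<le> norm (xA - xs N) + norm (xA - x)"
  proof -
    have "x - xs N = (xA - xs N) + (x - xA)" by simp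
    hence "norm (x - xs N) \<le> norm (xA - xs N) + norm (x - xA)" by (metis norm_triangle_ineq)
    thus ?thesis by (simp add: norm_minus_commute)
  qed
  hence "norm (x - xs N) \<le> (sqrt c + \<delta>) * norm eA + norm (xA - x)" using fin by linarith
  thus ?thesis unfolding N_def t_def q_def r_def c_def .
qed

end
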